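(* If $G$ is a connected edge-transitive graph, then for every edge $\{a,b\}$ of $G$ the eigenvalue support of $e_a-e_b$ consists of all the non-zero Laplacian eigenvalues of $G$.
   Context: Let $L=\Delta-A$ be the Laplacian of $G$ with spectral decomposition $L=\sum_r\theta_rE_r$ ($\theta_r$ distinct eigenvalues, $E_r$ orthogonal projections onto eigenspaces). The eigenvalue support of a vector $x$ is the set of $\theta_r$ with $E_rx\neq0$. *)

theory Defs
  imports "HOL-Analysis.Analysis"
begin

definition simple_graph :: "('n \<Rightarrow> 'n \<Rightarrow> bool) \<Rightarrow> bool" where
  "simple_graph E \<longleftrightarrow> (\<forall>x y. E x y \<longrightarrow> E y x) \<and> (\<forall>x. \<not> E x x)"

definition graph_connected :: "('n \<Rightarrow> 'n \<Rightarrow> bool) \<Rightarrow> bool" where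
  "graph_connected E \<longleftrightarrow> (\<forall>x y. E\<^sup>*\<^sup>* x y)"

definition graph_automorphism :: "('n \<Rightarrow> 'n \<Rightarrow> bool) \<Rightarrow> ('n \<Rightarrow> 'n) \<Rightarrow> bool" where
  "graph_automorphism E \<sigma> \<longleftrightarrow> bij \<sigma> \<and> (\<forall>x y. E x y \<longleftrightarrow> E (\<sigma> x) (\<sigma> y))"

definition edge_transitive :: "('n \<Rightarrow> 'n \<Rightarrow> bool) \<Rightarrow> bool" where
  "edge_transitive E \<longleftrightarrow>
     (\<forall>a b c d. E a b \<longrightarrow> E c d \<longrightarrow>
        (\<exists>\<sigma>. graph_automorphism E \<sigma> \<and> \<sigma> ` {a, b} = {c, d}))"

definition degree :: "('n::finite \<Rightarrow> 'n \<Rightarrow> bool) \<Rightarrow> 'n \<Rightarrow> nat" where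
  "degree E x = card {y. E x y}"

definition adjacency_matrix :: "('n::finite \<Rightarrow> 'n \<Rightarrow> bool) \<Rightarrow> real^'n^'n" where
  "adjacency_matrix E = (\<chi> i j. if E i j then 1 else 0)"

definition degree_matrix :: "('n::finite \<Rightarrow> 'n \<Rightarrow> bool) \<Rightarrow> real^'n^'n" where
  "degree_matrix E = (\<chi> i j. if i = j then real (degree E i) else 0)"

definition laplacian :: "('n::finite \<Rightarrow> 'n \<Rightarrow> bool) \<Rightarrow> real^'n^'n" where
  "laplacian E = degree_matrix E - adjacency_matrix E"

definition is_eigenvalue :: "real^'n^'n \<Rightarrow> real \<Rightarrow> bool" where
  "is_eigenvalue M \<theta> \<longleftrightarrow> (\<exists>v. v \<noteq> 0 \<and> M *v v = \<theta> *\<^sub>R v)"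

definition eigenspace :: "real^'n^'n \<Rightarrow> real \<Rightarrow> (real^'n) set" where
  "eigenspace M \<theta> = {v. M *v v = \<theta> *\<^sub>R v}"

definition orth_proj :: "(real^'n) set \<Rightarrow> real^'n \<Rightarrow> real^'n" where
  "orth_proj S x = (THE p. p \<in> S \<and> (\<forall>v\<in>S. inner (x - p) v = 0))"

definition eigenvalue_support :: "real^'n^'n \<Rightarrow> real^'n \<Rightarrow> real set" where
  "eigenvalue_support M x = {\<theta>. is_eigenvalue M \<theta> \<and> orth_proj (eigenspace M \<theta>) x \<noteq> 0}"

end

theory Submission
  imports Defs
begin

lemma eigenspace_subspace: "subspace (eigenspace M \<theta>)"
  unfolding subspace_def eigenspace_def
  by (auto simp: matrix_vector_right_distrib matrix_vector_mult_scaleR scaleR_add_right)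

lemma orth_proj_zero_iff:
  assumes S: "subspace S"
  shows "orth_proj S x = 0 \<longleftrightarrow> (\<forall>v\<in>S. inner x v = 0)"
proof -
  have uniq: "p = q" if "p \<in> S" "\<forall>v\<in>S. inner (x - p) v = 0" "q \<in> S" "\<forall>v\<in>S. inner (x - q) v = 0" for p q
  proof -
    have d: "p - q \<in> S" using that S by (simp add: subspace_diff)
    have "inner (p - q) (p - q) = inner (x - q) (p - q) - inner (x - p) (p - q)"
      by (simp add: inner_diff_left)
    also have "\<dots> = 0" using that d by simp
    finally show ?thesis by simp
  qed
  obtain y z where y: "y \<in> span S" and z: "\<And>w. w \<in> span S \<Longrightarrow> orthogonal z w" and xe: "x = y + z"
    using orthogonal_subspace_decomp_exists by blast
  have yS: "y \<in> S" using y S by (metis span_eq_iff)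
  have ex: "\<forall>v\<in>S. inner (x - y) v = 0" using z xe by (auto simp: orthogonal_def span_base)
  have the: "orth_proj S x = y"
    unfolding orth_proj_def
    apply (rule the_equality)
    using yS ex uniq by blast+
  show ?thesis
  proof
    assume "orth_proj S x = 0"
    then have "y = 0" using the by simp
    then show "\<forall>v\<in>S. inner x v = 0" using ex by simp
  next
    assume h: "\<forall>v\<in>S. inner x v = 0"
    have "0 \<in> S" using S by (simp add: subspace_0)
    then have "y = 0" using uniq[OF yS ex, of 0] h by simp
    then show "orth_proj S x = 0" using the by simp
  qed
qed

lemma laplacian_apply:
  "(laplacian E *v v) $ i = (\<Sum>j\<in>UNIV. if E i j then v $ i - v $ j else 0)"
proof -
  have "(laplacian E *v v) $ i = (\<Sum>j\<in>UNIV. (if i = j then real (degree E i) else 0) * v $ j)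
        - (\<Sum>j\<in>UNIV. (if E i j then 1 else 0) * v $ j)"
    by (simp add: laplacian_def matrix_vector_mult_def degree_matrix_def adjacency_matrix_def
        left_diff_distrib sum_subtractf)
  also have "(\<Sum>j\<in>UNIV. (if i = j then real (degree E i) else 0) * v $ j) = real (degree E i) * v $ i"
  proof -
    have "(\<Sum>j\<in>UNIV. (if i = j then real (degree E i) else 0) * v $ j) = (\<Sum>j\<in>UNIV. if i = j then real (degree E i) * v $ j else 0)"
      by (rule sum.cong) auto
    then show ?thesis by simp
  qed
  also have "real (degree E i) * v $ i = (\<Sum>j\<in>UNIV. if E i j then v $ i else 0)"
    by (simp add: degree_def sum.If_cases)
  finally show ?thesis
    by (simp add: sum_subtractf[symmetric] if_distrib cong: if_cong) (rule sum.cong; auto)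
qed

lemma inner_edge: "inner (axis a 1 - axis b 1) v = v $ a - v $ b"
  by (simp add: inner_diff_left inner_axis')

lemma kernel_edge:
  assumes sg: "simple_graph E" and L: "laplacian E *v v = 0" and e: "E a b"
  shows "v $ a = v $ b"
proof -
  define f where "f c d = (if E c d then (v $ c - v $ d)^2 else 0)" for c d
  have row: "(\<Sum>d\<in>UNIV. if E c d then v $ c * (v $ c - v $ d) else 0) = 0" for c
  proof -
    have "(\<Sum>d\<in>UNIV. if E c d then v $ c * (v $ c - v $ d) else 0)
          = v $ c * (laplacian E *v v) $ c"
      by (simp add: laplacian_apply sum_distrib_left if_distrib cong: if_cong)
    then show ?thesis using L by simp
  qed
  have s1: "(\<Sum>c\<in>UNIV. \<Sum>d\<in>UNIV. if E c d then v $ c * (v $ c - v $ d) else 0) = 0"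
    using row by simp
  have s2: "(\<Sum>c\<in>UNIV. \<Sum>d\<in>UNIV. if E c d then v $ d * (v $ d - v $ c) else 0) = 0"
  proof -
    have "(\<Sum>c\<in>UNIV. \<Sum>d\<in>UNIV. if E c d then v $ d * (v $ d - v $ c) else 0)
        = (\<Sum>d\<in>UNIV. \<Sum>c\<in>UNIV. if E c d then v $ d * (v $ d - v $ c) else 0)"
      by (rule sum.swap)
    also have "\<dots> = (\<Sum>d\<in>UNIV. \<Sum>c\<in>UNIV. if E d c then v $ d * (v $ d - v $ c) else 0)"
      using sg unfolding simple_graph_def by (intro sum.cong refl) (metis)
    finally show ?thesis using row by simp
  qed
  have "(\<Sum>c\<in>UNIV. \<Sum>d\<in>UNIV. f c d) =
     (\<Sum>c\<in>UNIV. \<Sum>d\<in>UNIV. if E c d then v $ c * (v $ c - v $ d) else 0)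
   + (\<Sum>c\<in>UNIV. \<Sum>d\<in>UNIV. if E c d then v $ d * (v $ d - v $ c) else 0)"
    unfolding f_def sum.distrib[symmetric]
    by (intro sum.cong refl) (auto simp: power2_eq_square algebra_simps)
  then have tot: "(\<Sum>c\<in>UNIV. \<Sum>d\<in>UNIV. f c d) = 0" using s1 s2 by simp
  have nn: "f c d \<ge> 0" for c d by (simp add: f_def)
  have "(\<Sum>d\<in>UNIV. f a d) = 0"
    using tot sum_nonneg_eq_0_iff[of UNIV "\<lambda>c. \<Sum>d\<in>UNIV. f c d"] nn
    by (simp add: sum_nonneg)
  then have "f a b = 0"
    using sum_nonneg_eq_0_iff[of UNIV "\<lambda>d. f a d"] nn by simp
  then show ?thesis using e by (simp add: f_def)
qed

lemma degree_aut:
  assumes "graph_automorphism E \<sigma>"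
  shows "(\<Sum>j\<in>UNIV. if E i j then g (\<sigma> j) else 0) = (\<Sum>k\<in>UNIV. if E (\<sigma> i) k then g k else (0::real))"
proof -
  have b: "bij \<sigma>" and e: "\<And>x y. E x y \<longleftrightarrow> E (\<sigma> x) (\<sigma> y)"
    using assms unfolding graph_automorphism_def by auto
  have "(\<Sum>k\<in>UNIV. if E (\<sigma> i) k then g k else (0::real))
      = (\<Sum>j\<in>UNIV. if E (\<sigma> i) (\<sigma> j) then g (\<sigma> j) else 0)"
    using sum.reindex[of \<sigma> UNIV "\<lambda>k. if E (\<sigma> i) k then g k else (0::real)"] b
    by (simp add: bij_is_inj bij_is_surj comp_def)
  then show ?thesis using e by simp
qed

lemma aut_eigen:
  assumes "graph_automorphism E \<sigma>" and "laplacian E *v v = \<theta> *\<^sub>R v"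
  shows "laplacian E *v (\<chi> i. v $ \<sigma> i) = \<theta> *\<^sub>R (\<chi> i. v $ \<sigma> i)"
proof (subst vec_eq_iff, intro allI)
  fix i
  have "(laplacian E *v (\<chi> i. v $ \<sigma> i)) $ i = (\<Sum>j\<in>UNIV. if E i j then v $ \<sigma> i - v $ \<sigma> j else 0)"
    unfolding laplacian_apply by (rule sum.cong) auto
  also have "\<dots> = (\<Sum>k\<in>UNIV. if E (\<sigma> i) k then v $ \<sigma> i - v $ k else 0)"
    using degree_aut[OF assms(1), of i "\<lambda>k. v $ \<sigma> i - v $ k"] by simp
  also have "\<dots> = (laplacian E *v v) $ \<sigma> i" by (simp add: laplacian_apply)
  also have "\<dots> = (\<theta> *\<^sub>R (\<chi> i. v $ \<sigma> i)) $ i" using assms(2) by simp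
  finally show "(laplacian E *v (\<chi> i. v $ \<sigma> i)) $ i = (\<theta> *\<^sub>R (\<chi> i. v $ \<sigma> i)) $ i" .
qed

theorem mainTheorem13:
  fixes E :: "'n::finite \<Rightarrow> 'n \<Rightarrow> bool"
  assumes "simple_graph E"
    and "graph_connected E"
    and "edge_transitive E"
    and "E a b"
  shows "eigenvalue_support (laplacian E) (axis a 1 - axis b 1)
           = {\<theta>. is_eigenvalue (laplacian E) \<theta> \<and> \<theta> \<noteq> 0}"
proof -
  let ?x = "axis a 1 - axis b 1 :: real^'n"
  have key: "orth_proj (eigenspace (laplacian E) \<theta>) ?x = 0 \<longleftrightarrow>
      (\<forall>v. laplacian E *v v = \<theta> *\<^sub>R v \<longrightarrow> v $ a = v $ b)" for \<theta>
    unfolding orth_proj_zero_iff[OF eigenspace_subspace] inner_edge by (simp add: eigenspace_def)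
  show ?thesis
  proof (rule set_eqI, rule iffI)
    fix \<theta> assume "\<theta> \<in> eigenvalue_support (laplacian E) ?x"
    then have ev: "is_eigenvalue (laplacian E) \<theta>" and np: "orth_proj (eigenspace (laplacian E) \<theta>) ?x \<noteq> 0"
      by (auto simp: eigenvalue_support_def)
    have "\<theta> \<noteq> 0"
    proof
      assume "\<theta> = 0"
      then have "orth_proj (eigenspace (laplacian E) \<theta>) ?x = 0"
        using key kernel_edge[OF assms(1) _ assms(4)] by simp
      then show False using np by simp
    qed
    then show "\<theta> \<in> {\<theta>. is_eigenvalue (laplacian E) \<theta> \<and> \<theta> \<noteq> 0}" using ev by simp
  next
    fix \<theta> assume "\<theta> \<in> {\<theta>. is_eigenvalue (laplacian E) \<theta> \<and> \<theta> \<noteq> 0}"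
    then have ev: "is_eigenvalue (laplacian E) \<theta>" and nz: "\<theta> \<noteq> 0" by auto
    obtain v where v0: "v \<noteq> 0" and vL: "laplacian E *v v = \<theta> *\<^sub>R v"
      using ev unfolding is_eigenvalue_def by blast
    have "orth_proj (eigenspace (laplacian E) \<theta>) ?x \<noteq> 0"
    proof
      assume "orth_proj (eigenspace (laplacian E) \<theta>) ?x = 0"
      then have H: "\<And>w. laplacian E *v w = \<theta> *\<^sub>R w \<Longrightarrow> w $ a = w $ b" using key by blast
      have edge: "v $ c = v $ d" if cd: "E c d" for c d
      proof -
        obtain \<sigma> where aut: "graph_automorphism E \<sigma>" and im: "\<sigma> ` {a, b} = {c, d}"
          using assms(3) assms(4) cd unfolding edge_transitive_def by metis
        have "(\<chi> i. v $ \<sigma> i) $ a = (\<chi> i. v $ \<sigma> i) $ b"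
          by (rule H[OF aut_eigen[OF aut vL]])
        then have "v $ \<sigma> a = v $ \<sigma> b" by simp
        moreover have "(\<sigma> a = c \<and> \<sigma> b = d) \<or> (\<sigma> a = d \<and> \<sigma> b = c)"
          using im by (auto simp: doubleton_eq_iff)
        ultimately show ?thesis by auto
      qed
      have "laplacian E *v v = 0"
        by (subst vec_eq_iff) (auto simp: laplacian_apply edge intro!: sum.neutral)
      then have "\<theta> *\<^sub>R v = 0" using vL by simp
      then show False using nz v0 by simp
    qed
    then show "\<theta> \<in> eigenvalue_support (laplacian E) ?x"
      using ev by (simp add: eigenvalue_support_def)
  qed
qed

end
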